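(* Let $k,m\in\mathbb{N}$ with $m<k\le 2m$ and $\gcd(2k+1,2(2m+1))=1$, and let $a>0$ satisfy $\frac{1}{4km+3k+m+1}\le\frac{a}{2k+1}\le\frac{1}{4km+k+3m+1}$. For $s=1,\dots,4m+1$ and $n=1,\dots,2k$, put $X_{sn}=\frac{s}{2(2m+1)}-\frac{n}{2k+1}$ and $\Phi_{sn}(0,0)=\sum_{l\in\mathbb{Z}}Q_2\big(2a(2m+1)(l+X_{sn})\big)$, where $Q_2(x)=(1-|x|)\chi_{[-1,1]}(x)$. Then $-1<X_{sn}<1$, $X_{sn}\neq0$, and $$\Phi_{sn}(0,0)=\begin{cases}\sum_{l=-1}^{0}Q_2\big(2a(2m+1)(l+X_{sn})\big), & 0<X_{sn}<1,\\ \sum_{l=0}^{1}Q_2\big(2a(2m+1)(l+X_{sn})\big), & -1<X_{sn}<0.\end{cases}$$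
   Context: This is the setting $ab=\frac{2k+1}{2(2m+1)}$ with $b$ in $\left[\frac{2k+1}{2}-\frac{k-m}{2(2m+1)},\frac{2k+1}{2}+\frac{k-m}{2(2m+1)}\right]$, rewritten as the stated range for $a$; $\Phi_{sn}(0,0)$ is the $(s,n)$ entry of the symbol matrix of the Gabor system of $Q_2$ at $(x,t)=(0,0)$. *)

theory Defs
  imports "HOL-Analysis.Analysis"
begin

definition Q2 :: "real \<Rightarrow> real" where
  "Q2 x = (1 - \<bar>x\<bar>) * indicator {-1..1} x"

definition Xsn :: "nat \<Rightarrow> nat \<Rightarrow> nat \<Rightarrow> nat \<Rightarrow> real" where
  "Xsn k m s n = real s / (2 * (2 * real m + 1)) - real n / (2 * real k + 1)"

definition Phi00 :: "real \<Rightarrow> nat \<Rightarrow> nat \<Rightarrow> nat \<Rightarrow> nat \<Rightarrow> real" where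
  "Phi00 a k m s n = (\<Sum>\<^sub>\<infinity> l::int. Q2 (2 * a * (2 * real m + 1) * (real_of_int l + Xsn k m s n)))"

end

theory Submission
  imports Defs
begin

lemma Q2_zero: assumes "c \<ge> 1" "\<bar>y\<bar> \<ge> 1" shows "Q2 (c * y) = 0"
proof -
  have "\<bar>c*y\<bar> \<ge> 1" using assms by (simp add: abs_mult) (metis mult_mono' abs_ge_zero mult_1_left order_trans zero_le_one)
  then show ?thesis unfolding Q2_def indicator_def by auto
qed

theorem lemma3p1:
  fixes k m s n :: nat and a :: real
  assumes "m < k" and "k \<le> 2 * m"
    and "gcd (2 * k + 1) (2 * (2 * m + 1)) = 1"
    and "a > 0"
    and "1 / (4 * real k * real m + 3 * real k + real m + 1) \<le> a / (2 * real k + 1)"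
    and "a / (2 * real k + 1) \<le> 1 / (4 * real k * real m + real k + 3 * real m + 1)"
    and "1 \<le> s" and "s \<le> 4 * m + 1" and "1 \<le> n" and "n \<le> 2 * k"
  shows "-1 < Xsn k m s n \<and> Xsn k m s n < 1 \<and> Xsn k m s n \<noteq> 0 \<and>
    (0 < Xsn k m s n \<longrightarrow>
       Phi00 a k m s n = (\<Sum>l\<in>{-1..0::int}. Q2 (2 * a * (2 * real m + 1) * (real_of_int l + Xsn k m s n)))) \<and>
    (Xsn k m s n < 0 \<longrightarrow>
       Phi00 a k m s n = (\<Sum>l\<in>{0..1::int}. Q2 (2 * a * (2 * real m + 1) * (real_of_int l + Xsn k m s n))))"
proof -
  define X where "X = Xsn k m s n"
  define c where "c = 2 * a * (2 * real m + 1)"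
  define D where "D = 4 * real k * real m + 3 * real k + real m + 1"
  have Dpos: "D > 0" unfolding D_def by (simp add: add_nonneg_pos add_nonneg_nonneg)
  have "1 / D \<le> a / (2 * real k + 1)" using assms(5) unfolding D_def .
  hence h1: "2 * real k + 1 \<le> a * D" using Dpos by (simp add: field_simps)
  have "D \<le> 2 * (2 * real m + 1) * (2 * real k + 1)" unfolding D_def by (simp add: algebra_simps)
  hence "a * D \<le> a * (2 * (2 * real m + 1) * (2 * real k + 1))" using assms(4) by simp
  hence "2 * real k + 1 \<le> c * (2 * real k + 1)" using h1 unfolding c_def by (simp add: algebra_simps)
  hence c1: "c \<ge> 1" by simp
  have Xdef: "X = real s / (2 * (2 * real m + 1)) - real n / (2 * real k + 1)"
    unfolding X_def Xsn_def by simp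
  have "real s / (2 * (2 * real m + 1)) < 1"
    using assms(8) by (simp add: field_simps)
  moreover have "real n / (2 * real k + 1) < 1" using assms(10) by (simp add: field_simps)
  moreover have "real s / (2 * (2 * real m + 1)) \<ge> 0" "real n / (2 * real k + 1) \<ge> 0" by auto
  ultimately have b1: "-1 < X" and b2: "X < 1" unfolding Xdef by linarith+
  have b3: "X \<noteq> 0"
  proof
    assume "X = 0"
    hence "real s / (2 * (2 * real m + 1)) = real n / (2 * real k + 1)" unfolding Xdef by simp
    hence "real s * (2 * real k + 1) = real n * (2 * (2 * real m + 1))" by (simp add: field_simps)
    hence "real (s * (2 * k + 1)) = real (n * (2 * (2 * m + 1)))" by (simp only: of_nat_mult of_nat_add of_nat_1 of_nat_numeral)
    hence e: "s * (2 * k + 1) = n * (2 * (2 * m + 1))" by (simp only: of_nat_eq_iff)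
    have "2 * (2 * m + 1) dvd s * (2 * k + 1)" unfolding e by (rule dvd_triv_right)
    moreover have "coprime (2 * (2 * m + 1)) (2 * k + 1)" using assms(3)
      by (simp add: coprime_iff_gcd_eq_1 gcd.commute)
    ultimately have "2 * (2 * m + 1) dvd s" using coprime_dvd_mult_left_iff by blast
    hence "2 * (2 * m + 1) \<le> s" using assms(7) by (simp add: dvd_imp_le)
    thus False using assms(8) by simp
  qed
  have sumeq: "(\<Sum>\<^sub>\<infinity> l::int. Q2 (c * (real_of_int l + X))) = (\<Sum>l\<in>S. Q2 (c * (real_of_int l + X)))"
    if S: "S = {-1..0::int} \<and> 0 < X \<or> S = {0..1::int} \<and> X < 0" for S
  proof -
    have fin: "finite S" using S by auto
    have "(\<Sum>\<^sub>\<infinity> l::int. Q2 (c * (real_of_int l + X))) = (\<Sum>\<^sub>\<infinity> l\<in>S. Q2 (c * (real_of_int l + X)))"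
    proof (rule infsum_cong_neutral)
      fix l :: int assume l: "l \<in> UNIV - S"
      have "\<bar>real_of_int l + X\<bar> \<ge> 1"
      proof (cases "0 < X")
        case True
        hence "l \<ge> 1 \<or> l \<le> -2" using l S by auto
        moreover have "real_of_int l \<ge> 1 \<or> real_of_int l \<le> -2" using calculation by linarith
        ultimately show ?thesis using b1 b2 True by linarith
      next
        case False
        hence "l \<ge> 2 \<or> l \<le> -1" using l S by auto
        moreover have "real_of_int l \<ge> 2 \<or> real_of_int l \<le> -1" using calculation by linarith
        ultimately show ?thesis using b1 b2 False by linarith
      qed
      thus "Q2 (c * (real_of_int l + X)) = 0" using Q2_zero c1 by blast
    qed auto
    thus ?thesis using fin by simp
  qed
  show ?thesis
    using b1 b2 b3 sumeq[of "{-1..0}"] sumeq[of "{0..1}"]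
    unfolding Phi00_def X_def[symmetric] c_def[symmetric] by auto
qed

end
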